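(* Fix $t_0>-(\mu-1)$. Then there exists $C=C(t_0)>0$ such that for all $t\geq t_0$ and all $N\in\mathbb N$, $\frac1{Z_N(t)}\int_{\mathbb R^{N-1}}\frac1NP_4(y)e^{-\frac{tP_2(y)+Q(y)}{2N}}dy\leq C$.
   Context: Fix $\mu>1$. For $N\in\mathbb N$ let $K_N$ be the periodic discrete Laplacian $(K_Nx)_k=\frac{\mu}{4\sin^2(\pi/N)}(2x_k-x_{k+1}-x_{k-1})$ (indices mod $N$). Let $A$ be an $N\times(N-1)$ matrix whose columns form an orthonormal basis of $\{x\in\mathbb R^N:\sum_kx_k=0\}$. For $y\in\mathbb R^{N-1}$ let $P_m(y)=\sum_{k=1}^N(Ay)_k^m$ ($m=2,4$) and $Q(y)=\langle Ay,K_NAy\rangle-P_2(y)$. For $t>-(\mu-1)$ let $Z_N(t)=\int_{\mathbb R^{N-1}}e^{-\frac{tP_2(y)+Q(y)}{2N}}dy$. *)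

theory Defs
  imports "HOL-Analysis.Analysis"
begin

text \<open>Vectors in R^N are functions nat => real, with indices 0..N-1 meaningful.
  The matrix A is an N x (N-1) matrix given as a function A k j (row k < N, column j < N-1).\<close>

definition is_onb_sum_zero :: "nat \<Rightarrow> (nat \<Rightarrow> nat \<Rightarrow> real) \<Rightarrow> bool" where
  "is_onb_sum_zero N A \<longleftrightarrow>
     (\<forall>i<N-1. \<forall>j<N-1. (\<Sum>k<N. A k i * A k j) = (if i = j then 1 else 0)) \<and>
     (\<forall>j<N-1. (\<Sum>k<N. A k j) = 0) \<and>
     (\<forall>x::nat \<Rightarrow> real. (\<Sum>k<N. x k) = 0 \<longrightarrow>
        (\<exists>y::nat \<Rightarrow> real. \<forall>k<N. x k = (\<Sum>j<N-1. A k j * y j)))"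

definition Amul :: "nat \<Rightarrow> (nat \<Rightarrow> nat \<Rightarrow> real) \<Rightarrow> (nat \<Rightarrow> real) \<Rightarrow> nat \<Rightarrow> real" where
  "Amul N A y k = (\<Sum>j<N-1. A k j * y j)"

definition KN :: "real \<Rightarrow> nat \<Rightarrow> (nat \<Rightarrow> real) \<Rightarrow> nat \<Rightarrow> real" where
  "KN \<mu> N x k = \<mu> / (4 * (sin (pi / real N))^2) *
      (2 * x k - x ((k + 1) mod N) - x ((k + N - 1) mod N))"

definition Pm :: "nat \<Rightarrow> nat \<Rightarrow> (nat \<Rightarrow> nat \<Rightarrow> real) \<Rightarrow> (nat \<Rightarrow> real) \<Rightarrow> real" where
  "Pm m N A y = (\<Sum>k<N. (Amul N A y k) ^ m)"

definition Qf :: "real \<Rightarrow> nat \<Rightarrow> (nat \<Rightarrow> nat \<Rightarrow> real) \<Rightarrow> (nat \<Rightarrow> real) \<Rightarrow> real" where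
  "Qf \<mu> N A y = (\<Sum>k<N. Amul N A y k * KN \<mu> N (Amul N A y) k) - Pm 2 N A y"

definition RN :: "nat \<Rightarrow> (nat \<Rightarrow> real) measure" where
  "RN n = PiM {..<n} (\<lambda>_. lborel)"

definition weight :: "real \<Rightarrow> nat \<Rightarrow> (nat \<Rightarrow> nat \<Rightarrow> real) \<Rightarrow> real \<Rightarrow> (nat \<Rightarrow> real) \<Rightarrow> real" where
  "weight \<mu> N A t y = exp (- (t * Pm 2 N A y + Qf \<mu> N A y) / (2 * real N))"

definition ZN :: "real \<Rightarrow> nat \<Rightarrow> (nat \<Rightarrow> nat \<Rightarrow> real) \<Rightarrow> real \<Rightarrow> real" where
  "ZN \<mu> N A t = (\<integral>y. weight \<mu> N A t y \<partial>RN (N - 1))"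

end

theory Submission
  imports Defs "HOL-Probability.Distributions" "Jordan_Normal_Form.Determinant"
begin


definition cyc :: "nat \<Rightarrow> (nat \<Rightarrow> real) \<Rightarrow> real" where
  "cyc N x = (\<Sum>k<N. (x ((k+1) mod N) - x k)^2)"

lemma mod_h12: assumes "(k::nat) < N" shows "((k+1) mod N + N - 1) mod N = k"
proof (cases "k + 1 < N")
  case True
  then have "(k+1) mod N + N - 1 = k + N" by simp
  then show ?thesis using assms by simp
next
  case False then have "k + 1 = N" using assms by auto
  then show ?thesis using assms by auto
qed

lemma mod_h21: assumes "(k::nat) < N" shows "((k + N - 1) mod N + 1) mod N = k"
proof (cases "k = 0")
  case True
  then have "(k + N - 1) mod N + 1 = N" using assms by simp
  then show ?thesis using True by simp
next
  case False
  have e: "k + N - 1 = (k - 1) + N" using False by simp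
  have l: "k - 1 < N" using assms by simp
  have "(k + N - 1) mod N = ((k - 1) + N) mod N" by (subst e) (rule refl)
  also have "\<dots> = k - 1" using mod_add_self2[of "k-1" N] mod_less[OF l] by metis
  finally have "(k + N - 1) mod N + 1 = k" using False by simp
  then show ?thesis using assms by simp
qed

lemma sum_shift_mod:
  assumes "0 < (N::nat)"
  shows "(\<Sum>k<N. f ((k+1) mod N)) = (\<Sum>k<N. (f k :: 'a::comm_monoid_add))"
proof (rule sum.reindex_bij_witness[where i="\<lambda>k::nat. (k+N-1) mod N" and j="\<lambda>k::nat. (k+1) mod N"])
  fix a assume "a \<in> {..<N}" then show "((a + 1) mod N + N - 1) mod N = a" using mod_h12 by simp
next
  fix a assume "a \<in> {..<N}" then show "(a + 1) mod N \<in> {..<N}" using assms by simp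
next
  fix a assume "a \<in> {..<N}" then show "((a + N - 1) mod N + 1) mod N = a" using mod_h21 by simp
next
  fix a assume "a \<in> {..<N}" then show "(a + N - 1) mod N \<in> {..<N}" using assms by simp
qed simp

lemma sum_shift_mod':
  assumes "0 < (N::nat)"
  shows "(\<Sum>k<N. f ((k+N-1) mod N)) = (\<Sum>k<N. (f k :: 'a::comm_monoid_add))"
proof -
  have "(\<Sum>k<N. f ((k+N-1) mod N)) = (\<Sum>k<N. f (((k+1) mod N +N-1) mod N))"
    by (rule sum_shift_mod[symmetric, OF assms])
  also have "\<dots> = (\<Sum>k<N. f k)" by (rule sum.cong[OF refl]) (simp only: mod_h12 lessThan_iff)
  finally show ?thesis .
qed

lemma KN_form:
  assumes "0 < N"
  shows "(\<Sum>k<N. x k * (2 * x k - x ((k + 1) mod N) - x ((k + N - 1) mod N))) = cyc N x"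
proof -
  have a: "(\<Sum>k<N. (x ((k + 1) mod N))^2) = (\<Sum>k<N. (x k)^2)"
    using sum_shift_mod[OF assms, of "\<lambda>k. (x k)^2"] by simp
  have b: "(\<Sum>k<N. x k * x ((k + N - 1) mod N)) = (\<Sum>k<N. x ((k+1) mod N) * x k)"
  proof -
    have "(\<Sum>k<N. x ((k+1) mod N) * x k) = (\<Sum>k<N. x ((k+1) mod N) * x (((k+1) mod N + N - 1) mod N))"
      by (rule sum.cong[OF refl]) (simp only: mod_h12 lessThan_iff)
    then show ?thesis using sum_shift_mod[OF assms, of "\<lambda>k. x k * x ((k + N - 1) mod N)"] by simp
  qed
  have "cyc N x = (\<Sum>k<N. (x ((k + 1) mod N))^2) - 2 * (\<Sum>k<N. x ((k+1) mod N) * x k) + (\<Sum>k<N. (x k)^2)"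
    unfolding cyc_def by (simp add: power2_diff sum.distrib sum_subtractf sum_distrib_left mult.assoc)
  also have "\<dots> = 2 * (\<Sum>k<N. (x k)^2) - (\<Sum>k<N. x k * x ((k + 1) mod N)) - (\<Sum>k<N. x k * x ((k + N - 1) mod N))"
    unfolding a b by (simp add: mult.commute)
  also have "\<dots> = (\<Sum>k<N. x k * (2 * x k - x ((k + 1) mod N) - x ((k + N - 1) mod N)))"
    by (simp add: algebra_simps sum_subtractf sum_distrib_left power2_eq_square sum.distrib)
  finally show ?thesis by simp
qed

lemma sobolev:
  assumes N: "0 < N" and s: "(\<Sum>k<N. x k) = 0" and k: "k < N"
  shows "(x k)^2 \<le> real N * cyc N x"
proof -
  define S where "S = (\<Sum>i<N. \<bar>x ((i+1) mod N) - x i\<bar>)"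
  have le: "x b - x a \<le> S" if "a < N" "b < N" for a b
  proof (cases "a \<le> b")
    case True
    have "x b - x a = (\<Sum>i = a..<b. x (Suc i) - x i)" using sum_Suc_diff'[OF True, of x] by simp
    also have "\<dots> = (\<Sum>i = a..<b. x ((i+1) mod N) - x i)"
      by (rule sum.cong) (use that in auto)
    also have "\<dots> \<le> (\<Sum>i = a..<b. \<bar>x ((i+1) mod N) - x i\<bar>)" by (rule sum_mono) auto
    also have "\<dots> \<le> S" unfolding S_def by (rule sum_mono2) (use that in auto)
    finally show ?thesis .
  next
    case False
    then have "b \<le> a" by simp
    have "x a - x b = (\<Sum>i = b..<a. x (Suc i) - x i)" using sum_Suc_diff'[OF \<open>b \<le> a\<close>, of x] by simp
    also have "\<dots> = (\<Sum>i = b..<a. x ((i+1) mod N) - x i)"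
      by (rule sum.cong) (use that in auto)
    also have "\<dots> \<ge> - (\<Sum>i = b..<a. \<bar>x ((i+1) mod N) - x i\<bar>)"
      by (simp add: sum_negf[symmetric]) (rule sum_mono, auto)
    finally have "x b - x a \<le> (\<Sum>i = b..<a. \<bar>x ((i+1) mod N) - x i\<bar>)" by linarith
    also have "\<dots> \<le> S" unfolding S_def by (rule sum_mono2) (use that in auto)
    finally show ?thesis .
  qed
  have "real N * x k = (\<Sum>j<N. x k - x j)" using s by (simp add: sum_subtractf)
  also have "\<dots> \<le> (\<Sum>j<N. S)" by (rule sum_mono) (use le k in auto)
  finally have u: "x k \<le> S" using N by simp
  have "- (real N * x k) = (\<Sum>j<N. x j - x k)" using s by (simp add: sum_subtractf)
  also have "\<dots> \<le> (\<Sum>j<N. S)" by (rule sum_mono) (use le k in auto)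
  finally have "real N * (- x k) \<le> real N * S" using N by simp
  then have l: "- x k \<le> S" by (rule mult_left_le_imp_le) (use N in simp)
  have S0: "0 \<le> S" unfolding S_def by (auto intro: sum_nonneg)
  have "(x k)^2 \<le> S^2" using u l S0 by (simp add: abs_le_square_iff[symmetric] abs_le_iff)
  also have "\<dots> \<le> (\<Sum>i<N. \<bar>x ((i+1) mod N) - x i\<bar>^2) * real (card {..<N})"
    unfolding S_def by (rule sum_squared_le_sum_of_squares)
  also have "\<dots> = real N * cyc N x" by (simp add: cyc_def)
  finally show ?thesis .
qed



lemma cis_sum_int:
  fixes N :: nat and m :: int
  assumes N: "0 < N" and m0: "m \<noteq> 0" and mN: "\<bar>m\<bar> < int N"
  shows "(\<Sum>j<N. cis (2*pi*real j*real_of_int m/real N)) = 0"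
proof -
  define z where "z = cis (2*pi*real_of_int m/real N)"
  have zj: "cis (2*pi*real j*real_of_int m/real N) = z^j" for j
    unfolding z_def Complex.DeMoivre by (simp add: field_simps)
  have zN: "z^N = 1"
  proof -
    have "z^N = cis (real N * (2*pi*real_of_int m/real N))" unfolding z_def Complex.DeMoivre ..
    also have "\<dots> = cis (2*pi*real_of_int m)" using N by simp
    also have "\<dots> = 1" by (rule cis_multiple_2pi) simp
    finally show ?thesis .
  qed
  have z1: "z \<noteq> 1"
  proof
    assume "z = 1"
    then have "cos (2*pi*real_of_int m/real N) = 1" unfolding z_def
      by (metis complex.sel(1) one_complex.sel(1) cis.sel(1))
    then obtain n :: int where "2*pi*real_of_int m/real N = real_of_int n * 2 * pi"
      using cos_one_2pi_int by blast
    then have "real_of_int m = real_of_int n * real N" using N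
      by (simp add: field_simps)
    then have "m = n * int N" by (metis of_int_eq_iff of_int_mult of_int_of_nat_eq)
    moreover have "n \<noteq> 0" using m0 \<open>m = n * int N\<close> by auto
    then have "1 \<le> \<bar>n\<bar>" by simp
    then have "int N \<le> \<bar>n\<bar> * int N" using mult_right_mono[of 1 "\<bar>n\<bar>" "int N"] by simp
    then have "\<bar>m\<bar> \<ge> int N" using \<open>m = n * int N\<close> by (simp add: abs_mult)
    then show False using mN by simp
  qed
  show ?thesis unfolding zj using z1 zN by (simp add: sum_gp_strict)
qed

lemma cis_sum:
  assumes N: "0 < N" and k: "k < N" and l: "l < N"
  shows "(\<Sum>j<N. cis (2*pi*real j*(real k - real l)/real N)) = (if k = l then of_nat N else 0)"
proof (cases "k = l")
  case True then show ?thesis by simp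
next
  case False
  have "real k - real l = real_of_int (int k - int l)" by simp
  then have "(\<Sum>j<N. cis (2*pi*real j*(real k - real l)/real N)) =
     (\<Sum>j<N. cis (2*pi*real j*real_of_int (int k - int l)/real N))" by simp
  also have "\<dots> = 0" by (rule cis_sum_int) (use N k l False in auto)
  finally show ?thesis using False by simp
qed

definition dft :: "nat \<Rightarrow> (nat \<Rightarrow> real) \<Rightarrow> nat \<Rightarrow> complex" where
  "dft N f j = (\<Sum>k<N. of_real (f k) * cis (2*pi*real j*real k/real N))"

lemma parseval:
  assumes N: "0 < N"
  shows "(\<Sum>j<N. (cmod (dft N f j))^2) = real N * (\<Sum>k<N. (f k)^2)"
proof -
  have "complex_of_real (\<Sum>j<N. (cmod (dft N f j))^2) = (\<Sum>j<N. dft N f j * cnj (dft N f j))"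
    by (simp only: of_real_sum complex_norm_square)
  also have "\<dots> = (\<Sum>j<N. \<Sum>k<N. \<Sum>l<N. of_real (f k * f l) * cis (2*pi*real j*(real k - real l)/real N))"
  proof (rule sum.cong[OF refl])
    fix j
    have "dft N f j * cnj (dft N f j) = (\<Sum>k<N. \<Sum>l<N. (of_real (f k) * cis (2*pi*real j*real k/real N)) *
            (of_real (f l) * cis (- (2*pi*real j*real l/real N))))"
      unfolding dft_def cnj_sum sum_product by (simp add: cis_cnj)
    also have "\<dots> = (\<Sum>k<N. \<Sum>l<N. of_real (f k * f l) * cis (2*pi*real j*(real k - real l)/real N))"
    proof (intro sum.cong refl)
      fix k l
      have e: "2*pi*real j*real k/real N + - (2*pi*real j*real l/real N) = 2*pi*real j*(real k - real l)/real N"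
        by (simp add: right_diff_distrib diff_divide_distrib)
      have "(of_real (f k) * cis (2*pi*real j*real k/real N)) * (of_real (f l) * cis (- (2*pi*real j*real l/real N)))
          = of_real (f k * f l) * (cis (2*pi*real j*real k/real N) * cis (- (2*pi*real j*real l/real N)))"
        by (simp add: algebra_simps)
      also have "\<dots> = of_real (f k * f l) * cis (2*pi*real j*(real k - real l)/real N)"
        unfolding cis_mult e ..
      finally show "(of_real (f k) * cis (2*pi*real j*real k/real N)) * (of_real (f l) * cis (- (2*pi*real j*real l/real N)))
          = of_real (f k * f l) * cis (2*pi*real j*(real k - real l)/real N)" .
    qed
    finally show "dft N f j * cnj (dft N f j) = \<dots>" .
  qed
  also have "\<dots> = (\<Sum>k<N. \<Sum>l<N. of_real (f k * f l) * (\<Sum>j<N. cis (2*pi*real j*(real k - real l)/real N)))"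
    by (subst sum.swap, rule sum.cong[OF refl], subst sum.swap) (simp add: sum_distrib_left)
  also have "\<dots> = (\<Sum>k<N. \<Sum>l<N. of_real (f k * f l) * (if k = l then of_nat N else 0))"
    by (intro sum.cong refl) (simp add: cis_sum N)
  also have "\<dots> = (\<Sum>k<N. of_real (f k * f k) * of_nat N)"
  proof (rule sum.cong[OF refl])
    fix k assume k: "k \<in> {..<N}"
    have "(\<Sum>l<N. of_real (f k * f l) * (if k = l then (of_nat N::complex) else 0)) =
          (\<Sum>l<N. if k = l then of_real (f k * f l) * of_nat N else 0)"
      by (rule sum.cong) auto
    also have "\<dots> = of_real (f k * f k) * of_nat N" using k by (subst sum.delta') auto
    finally show "(\<Sum>l<N. of_real (f k * f l) * (if k = l then (of_nat N::complex) else 0)) =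
          of_real (f k * f k) * of_nat N" .
  qed
  also have "\<dots> = complex_of_real (real N * (\<Sum>k<N. (f k)^2))"
    by (simp add: sum_distrib_left power2_eq_square mult.commute)
  finally show ?thesis by (simp only: of_real_eq_iff)
qed

lemma cos_bound:
  assumes "1 \<le> j" "j < N"
  shows "cos (2*pi*real j/real N) \<le> cos (2*pi/real N)"
proof -
  have main: "cos (2*pi*real i/real N) \<le> cos (2*pi/real N)" if "1 \<le> i" "2*i \<le> N" for i
  proof (rule cos_monotone_0_pi_le)
    have "real N > 0" using that by simp
    show "0 \<le> 2*pi/real N" by simp
    show "2*pi/real N \<le> 2*pi*real i/real N" using that \<open>real N > 0\<close>
      by (intro divide_right_mono) auto
    have "2 * real i \<le> real N" using that by linarith
    then show "2*pi*real i/real N \<le> pi" using \<open>real N > 0\<close>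
      by (simp add: field_simps)
  qed
  show ?thesis
  proof (cases "2*j \<le> N")
    case True then show ?thesis using main assms by auto
  next
    case False
    define i where "i = N - j"
    have i: "1 \<le> i" "2*i \<le> N" using False assms unfolding i_def by auto
    have "2*pi*real j/real N = 2*pi - 2*pi*real i/real N" using assms unfolding i_def
      by (simp add: of_nat_diff field_simps)
    then have "cos (2*pi*real j/real N) = cos (2*pi*real i/real N)"
      by (simp add: cos_diff)
    then show ?thesis using main[OF i] by simp
  qed
qed

lemma norm_one_minus_cis: "(cmod (1 - cis t))^2 = 2 - 2 * cos t"
proof -
  have "(cmod (1 - cis t))^2 = (1 - cos t)^2 + (sin t)^2" by (simp add: cmod_power2)
  also have "\<dots> = 2 - 2 * cos t" using sin_cos_squared_add[of t] by (simp add: power2_diff)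
  finally show ?thesis .
qed

lemma wirtinger:
  assumes N: "2 \<le> N" and s: "(\<Sum>k<N. x k) = 0"
  shows "4 * (sin (pi/real N))^2 * (\<Sum>k<N. (x k)^2) \<le> cyc N x"
proof -
  have N0: "0 < N" using N by simp
  define d where "d k = x k - x ((k+N-1) mod N)" for k
  have cyc_d: "cyc N x = (\<Sum>k<N. (d k)^2)"
  proof -
    have "(\<Sum>k<N. (d k)^2) = (\<Sum>k<N. (d ((k+1) mod N))^2)"
      by (rule sum_shift_mod[symmetric, OF N0])
    also have "\<dots> = (\<Sum>k<N. (x ((k+1) mod N) - x (((k+1) mod N + N - 1) mod N))^2)"
      unfolding d_def ..
    also have "\<dots> = cyc N x" unfolding cyc_def
      by (rule sum.cong[OF refl]) (simp only: mod_h12 lessThan_iff)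
    finally show ?thesis by simp
  qed
  define c where "c j k = cis (2*pi*real j*real k/real N)" for j k
  have c_shift: "c j ((k+1) mod N) = cis (2*pi*real j/real N) * c j k" if "k < N" for j k
  proof (cases "k + 1 < N")
    case True then show ?thesis unfolding c_def
      by (simp add: cis_mult algebra_simps add_divide_distrib)
  next
    case False
    then have kN: "k + 1 = N" using that by simp
    have "cis (2*pi*real j/real N) * c j k = cis (2*pi*real j/real N + 2*pi*real j*real k/real N)"
      unfolding c_def by (simp add: cis_mult)
    also have "2*pi*real j/real N + 2*pi*real j*real k/real N = 2*pi*real j"
    proof -
      have "real k + 1 = real N" using kN by (metis of_nat_1 of_nat_add)
      have "2*pi*real j/real N + 2*pi*real j*real k/real N = 2*pi*real j*(real k + 1)/real N"
        by (simp add: distrib_left add_divide_distrib)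
      also have "\<dots> = 2*pi*real j" by (simp only: \<open>real k + 1 = real N\<close>) (use N0 in simp)
      finally show ?thesis .
    qed
    also have "cis (2*pi*real j) = 1" by (simp add: cis_multiple_2pi)
    finally show ?thesis using kN unfolding c_def by simp
  qed
  have dd: "dft N d j = (1 - cis (2*pi*real j/real N)) * dft N x j" for j
  proof -
    have "(\<Sum>k<N. of_real (x ((k+N-1) mod N)) * c j k) =
          (\<Sum>k<N. of_real (x (((k+1) mod N+N-1) mod N)) * c j ((k+1) mod N))"
      by (rule sum_shift_mod[symmetric, OF N0])
    also have "\<dots> = (\<Sum>k<N. of_real (x k) * (cis (2*pi*real j/real N) * c j k))"
      by (rule sum.cong[OF refl]) (simp only: mod_h12 lessThan_iff c_shift)
    finally have e: "(\<Sum>k<N. of_real (x ((k+N-1) mod N)) * c j k) = cis (2*pi*real j/real N) * dft N x j"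
      unfolding dft_def c_def by (simp add: sum_distrib_left algebra_simps)
    have "dft N d j = dft N x j - (\<Sum>k<N. of_real (x ((k+N-1) mod N)) * c j k)"
      unfolding dft_def d_def c_def by (simp add: sum_subtractf algebra_simps)
    then show ?thesis unfolding e by (simp add: algebra_simps)
  qed
  have x0: "dft N x 0 = 0" unfolding dft_def using s
    by (simp flip: of_real_sum)
  have bound: "4 * (sin (pi/real N))^2 * (cmod (dft N x j))^2 \<le> (cmod (dft N d j))^2" if "j < N" for j
  proof (cases "j = 0")
    case True then show ?thesis using x0 by simp
  next
    case False
    have "4 * (sin (pi/real N))^2 = 2 - 2 * cos (2*pi/real N)"
      using cos_double_sin[of "pi/real N"] by simp
    also have "\<dots> \<le> 2 - 2 * cos (2*pi*real j/real N)"
      using cos_bound[of j N] False that by simp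
    finally have a: "4 * (sin (pi/real N))^2 \<le> (cmod (1 - cis (2*pi*real j/real N)))^2"
      by (simp add: norm_one_minus_cis)
    have "(cmod (dft N d j))^2 = (cmod (1 - cis (2*pi*real j/real N)))^2 * (cmod (dft N x j))^2"
      unfolding dd by (simp add: norm_mult power_mult_distrib)
    then show ?thesis using a by (simp add: mult_right_mono)
  qed
  have "real N * (4 * (sin (pi/real N))^2 * (\<Sum>k<N. (x k)^2)) =
        4 * (sin (pi/real N))^2 * (\<Sum>j<N. (cmod (dft N x j))^2)"
    using parseval[OF N0, of x] by simp
  also have "\<dots> = (\<Sum>j<N. 4 * (sin (pi/real N))^2 * (cmod (dft N x j))^2)"
    by (simp add: sum_distrib_left)
  also have "\<dots> \<le> (\<Sum>j<N. (cmod (dft N d j))^2)" by (rule sum_mono) (use bound in auto)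
  also have "\<dots> = real N * cyc N x" using parseval[OF N0, of d] cyc_d by simp
  finally show ?thesis using N0 by (simp add: mult_le_cancel_left_pos)
qed



definition gK :: "real \<Rightarrow> nat \<Rightarrow> real \<Rightarrow> (nat \<Rightarrow> real) \<Rightarrow> nat \<Rightarrow> real" where
  "gK \<mu> N t z k = KN \<mu> N z k + (t - 1) * z k"

definition Phib :: "real \<Rightarrow> nat \<Rightarrow> real \<Rightarrow> (nat \<Rightarrow> real) \<Rightarrow> (nat \<Rightarrow> real) \<Rightarrow> real" where
  "Phib \<mu> N t x z = (\<Sum>k<N. x k * gK \<mu> N t z k)"

definition KNc :: "real \<Rightarrow> nat \<Rightarrow> real" where
  "KNc \<mu> N = \<mu> / (4 * (sin (pi / real N))^2)"

lemma KN_alt: "KN \<mu> N x k = KNc \<mu> N * (2 * x k - x ((k + 1) mod N) - x ((k + N - 1) mod N))"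
  unfolding KN_def KNc_def ..

lemma gK_sum:
  "gK \<mu> N t (\<lambda>k. \<Sum>i\<in>I. c i * f i k) k = (\<Sum>i\<in>I. c i * gK \<mu> N t (f i) k)"
  unfolding gK_def KN_alt
  by (simp add: sum_distrib_left sum_subtractf sum.distrib algebra_simps)

lemma gK_add:
  "gK \<mu> N t (\<lambda>k. x k + z k) k = gK \<mu> N t x k + gK \<mu> N t z k"
  unfolding gK_def KN_alt by (simp add: algebra_simps)

lemma Phib_sum:
  "Phib \<mu> N t (\<lambda>k. \<Sum>j\<in>J. a j * f j k) (\<lambda>k. \<Sum>i\<in>I. b i * g i k) =
   (\<Sum>j\<in>J. \<Sum>i\<in>I. a j * b i * Phib \<mu> N t (f j) (g i))"
proof -
  have "Phib \<mu> N t (\<lambda>k. \<Sum>j\<in>J. a j * f j k) (\<lambda>k. \<Sum>i\<in>I. b i * g i k) =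
      (\<Sum>k<N. (\<Sum>j\<in>J. a j * f j k) * (\<Sum>i\<in>I. b i * gK \<mu> N t (g i) k))"
    unfolding Phib_def gK_sum ..
  also have "\<dots> = (\<Sum>k<N. \<Sum>j\<in>J. \<Sum>i\<in>I. a j * b i * (f j k * gK \<mu> N t (g i) k))"
    unfolding sum_product by (simp add: algebra_simps)
  also have "\<dots> = (\<Sum>j\<in>J. \<Sum>k<N. \<Sum>i\<in>I. a j * b i * (f j k * gK \<mu> N t (g i) k))"
    by (rule sum.swap)
  also have "\<dots> = (\<Sum>j\<in>J. \<Sum>i\<in>I. \<Sum>k<N. a j * b i * (f j k * gK \<mu> N t (g i) k))"
    by (rule sum.cong[OF refl], rule sum.swap)
  also have "\<dots> = (\<Sum>j\<in>J. \<Sum>i\<in>I. a j * b i * Phib \<mu> N t (f j) (g i))"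
    unfolding Phib_def by (simp add: sum_distrib_left)
  finally show ?thesis .
qed

lemma Phib_add1: "Phib \<mu> N t (\<lambda>k. x k + x' k) z = Phib \<mu> N t x z + Phib \<mu> N t x' z"
  unfolding Phib_def by (simp add: algebra_simps sum.distrib)

lemma Phib_add2: "Phib \<mu> N t x (\<lambda>k. z k + z' k) = Phib \<mu> N t x z + Phib \<mu> N t x z'"
  unfolding Phib_def gK_add by (simp add: algebra_simps sum.distrib)

lemma Phib_diag:
  assumes "0 < N"
  shows "Phib \<mu> N t x x = KNc \<mu> N * cyc N x + (t - 1) * (\<Sum>k<N. (x k)^2)"
proof -
  have "Phib \<mu> N t x x = KNc \<mu> N *
      (\<Sum>k<N. x k * (2 * x k - x ((k + 1) mod N) - x ((k + N - 1) mod N))) + (t - 1) * (\<Sum>k<N. (x k)^2)"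
  proof -
    have "Phib \<mu> N t x x = (\<Sum>k<N. KNc \<mu> N * (x k * (2 * x k - x ((k + 1) mod N) - x ((k + N - 1) mod N))) + (t - 1) * (x k)^2)"
      unfolding Phib_def gK_def KN_alt by (rule sum.cong[OF refl]) (simp add: algebra_simps power2_eq_square)
    then show ?thesis by (simp add: sum.distrib sum_distrib_left)
  qed
  then show ?thesis using KN_form[OF assms] by simp
qed

lemma tPQ_Phib:
  "t * Pm 2 N A y + Qf \<mu> N A y = Phib \<mu> N t (Amul N A y) (Amul N A y)"
  unfolding Qf_def Pm_def Phib_def gK_def
  by (simp add: sum.distrib sum_distrib_left algebra_simps power2_eq_square sum_subtractf)

lemma coerc:
  assumes mu: "\<mu> > 1" and t0: "t0 > - (\<mu> - 1)" and t: "t \<ge> t0" and N: "2 \<le> N"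
    and s: "(\<Sum>k<N. x k) = 0"
  defines "c0 \<equiv> min 1 ((\<mu> - 1 + t0) / \<mu>)"
  shows "Phib \<mu> N t x x \<ge> c0 * \<mu> * (\<Sum>k<N. (x k)^2)"
    and "k < N \<Longrightarrow> Phib \<mu> N t x x \<ge> c0 * \<mu> * real N / (4 * pi^2) * (x k)^2"
proof -
  have N0: "0 < N" using N by simp
  define S where "S = sin (pi / real N)"
  have S0: "S > 0" unfolding S_def
    using N by (intro sin_gt_zero) (auto simp: field_simps)
  have S1: "S \<le> pi / real N" unfolding S_def by (rule sin_x_le_x) simp
  define al where "al = KNc \<mu> N"
  have al_def': "al = \<mu> / (4 * S^2)" unfolding al_def KNc_def S_def ..
  have al0: "al > 0" unfolding al_def' using S0 mu by simp
  define E where "E = al * cyc N x"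
  define Q where "Q = (\<Sum>k<N. (x k)^2)"
  have Q0: "Q \<ge> 0" unfolding Q_def by (auto intro: sum_nonneg)
  have Phi: "Phib \<mu> N t x x = E + (t - 1) * Q" unfolding E_def Q_def al_def
    by (rule Phib_diag[OF N0])
  have W: "4 * S^2 * Q \<le> cyc N x" unfolding S_def Q_def by (rule wirtinger[OF N s])
  have EQ: "\<mu> * Q \<le> E"
  proof -
    have "\<mu> * Q = al * (4 * S^2 * Q)" unfolding al_def' using S0 by simp
    also have "\<dots> \<le> al * cyc N x" using W al0 by (simp add: mult_left_mono)
    finally show ?thesis unfolding E_def .
  qed
  have E0: "E \<ge> 0" using EQ Q0 mu by (smt (verit) mult_nonneg_nonneg)
  have c0pos: "c0 > 0" unfolding c0_def using mu t0 by simp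
  have main: "Phib \<mu> N t x x \<ge> c0 * E"
  proof (cases "t \<ge> 1")
    case True
    have "c0 \<le> 1" unfolding c0_def by simp
    then have "c0 * E \<le> E" using mult_right_mono[OF \<open>c0 \<le> 1\<close> E0] by simp
    also have "E \<le> E + (t - 1) * Q" using True Q0 by simp
    finally show ?thesis using Phi by simp
  next
    case False
    have "(1 - t) * Q \<le> (1 - t) * (E / \<mu>)"
      using EQ mu False by (intro mult_left_mono) (auto simp: field_simps)
    then have "E + (t - 1) * Q \<ge> E * ((\<mu> - 1 + t) / \<mu>)" using mu by (simp add: field_simps)
    moreover have "(\<mu> - 1 + t) / \<mu> \<ge> c0" unfolding c0_def using mu t
      by (simp add: min_def divide_right_mono)
    ultimately have "E + (t - 1) * Q \<ge> c0 * E" using E0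
      by (smt (verit) mult.commute mult_left_mono)
    then show ?thesis using Phi by simp
  qed
  show "Phib \<mu> N t x x \<ge> c0 * \<mu> * Q"
    using main EQ c0pos by (smt (verit) mult.assoc mult_left_mono)
  assume k: "k < N"
  have sob: "(x k)^2 \<le> real N * cyc N x" by (rule sobolev[OF N0 s k])
  have "al \<ge> \<mu> * (real N)^2 / (4 * pi^2)"
  proof -
    have "S^2 \<le> (pi / real N)^2" using S0 S1 by (intro power_mono) auto
    then have "4 * S^2 \<le> 4 * pi^2 / (real N)^2" by (simp add: power_divide)
    then have "\<mu> / (4 * pi^2 / (real N)^2) \<le> \<mu> / (4 * S^2)"
      using S0 mu N by (intro divide_left_mono) auto
    then show ?thesis unfolding al_def' by (simp add: field_simps)
  qed
  then have "\<mu> * real N / (4 * pi^2) * (x k)^2 \<le> \<mu> * (real N)^2 / (4 * pi^2) * cyc N x"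
  proof -
    have "\<mu> * real N / (4 * pi^2) * (x k)^2 \<le> \<mu> * real N / (4 * pi^2) * (real N * cyc N x)"
      using sob mu by (intro mult_left_mono) auto
    then show ?thesis by (simp add: power2_eq_square field_simps)
  qed
  also have "\<dots> \<le> E" unfolding E_def
    using \<open>al \<ge> _\<close> by (intro mult_right_mono) (auto simp: cyc_def intro: sum_nonneg)
  finally have "\<mu> * real N / (4 * pi^2) * (x k)^2 \<le> E" .
  then have "c0 * (\<mu> * real N / (4 * pi^2) * (x k)^2) \<le> c0 * E" by (rule mult_left_mono) (use c0pos in simp)
  then show "Phib \<mu> N t x x \<ge> c0 * \<mu> * real N / (4 * pi^2) * (x k)^2" using main by simp
qed



definition colA :: "(nat \<Rightarrow> nat \<Rightarrow> real) \<Rightarrow> nat \<Rightarrow> nat \<Rightarrow> real" where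
  "colA A j = (\<lambda>k. A k j)"

definition Fq where
  "Fq \<mu> N A t y = Phib \<mu> N t (Amul N A y) (Amul N A y) / (2 * real N)"

definition Bq where
  "Bq \<mu> N A t y v = (Phib \<mu> N t (Amul N A y) (Amul N A v) + Phib \<mu> N t (Amul N A v) (Amul N A y)) / (2 * real N)"

definition Mx where
  "Mx \<mu> N A t j i = (Phib \<mu> N t (colA A j) (colA A i) + Phib \<mu> N t (colA A i) (colA A j)) / (2 * real N)"

lemma Amul_eq: "Amul N A y = (\<lambda>k. \<Sum>j<N-1. y j * colA A j k)"
  unfolding Amul_def colA_def by (simp add: mult.commute)

lemma Bq_Mx: "Bq \<mu> N A t y v = (\<Sum>j<N-1. \<Sum>i<N-1. y j * v i * Mx \<mu> N A t j i)"
proof -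
  have 1: "Phib \<mu> N t (Amul N A y) (Amul N A v) = (\<Sum>j<N-1. \<Sum>i<N-1. y j * v i * Phib \<mu> N t (colA A j) (colA A i))"
    unfolding Amul_eq by (rule Phib_sum)
  have 2: "Phib \<mu> N t (Amul N A v) (Amul N A y) = (\<Sum>j<N-1. \<Sum>i<N-1. y j * v i * Phib \<mu> N t (colA A i) (colA A j))"
    unfolding Amul_eq Phib_sum by (subst sum.swap) (simp add: mult.commute)
  show ?thesis unfolding Bq_def Mx_def 1 2
    by (simp add: sum_divide_distrib sum.distrib[symmetric] algebra_simps add_divide_distrib)
qed

lemma Amul_add: "Amul N A (\<lambda>i. y i + v i) = (\<lambda>k. Amul N A y k + Amul N A v k)"
  unfolding Amul_def by (simp add: algebra_simps sum.distrib)

lemma Fq_add: "Fq \<mu> N A t (\<lambda>i. y i + v i) = Fq \<mu> N A t y + Bq \<mu> N A t y v + Fq \<mu> N A t v"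
  unfolding Fq_def Bq_def Amul_add Phib_add1 Phib_add2 by (simp add: add_divide_distrib ac_simps)

lemma Bq_diag: "Bq \<mu> N A t v v = 2 * Fq \<mu> N A t v"
  unfolding Fq_def Bq_def by simp

lemma onb_sum_zero:
  assumes "is_onb_sum_zero N A"
  shows "(\<Sum>k<N. Amul N A y k) = 0"
proof -
  have "(\<Sum>k<N. Amul N A y k) = (\<Sum>j<N-1. y j * (\<Sum>k<N. A k j))"
    unfolding Amul_def by (subst sum.swap) (simp add: sum_distrib_left mult.commute)
  also have "\<dots> = 0" using assms unfolding is_onb_sum_zero_def by simp
  finally show ?thesis .
qed

lemma onb_P2:
  assumes "is_onb_sum_zero N A"
  shows "(\<Sum>k<N. (Amul N A y k)^2) = (\<Sum>j<N-1. (y j)^2)"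
proof -
  have "(\<Sum>k<N. (Amul N A y k)^2) = (\<Sum>k<N. \<Sum>i<N-1. \<Sum>j<N-1. y i * y j * (A k i * A k j))"
    unfolding Amul_def power2_eq_square sum_product by (simp add: algebra_simps)
  also have "\<dots> = (\<Sum>i<N-1. \<Sum>j<N-1. y i * y j * (\<Sum>k<N. A k i * A k j))"
    by (subst sum.swap, rule sum.cong[OF refl], subst sum.swap) (simp add: sum_distrib_left)
  also have "\<dots> = (\<Sum>i<N-1. \<Sum>j<N-1. y i * y j * (if i = j then 1 else 0))"
    using assms unfolding is_onb_sum_zero_def by (intro sum.cong refl) simp
  also have "\<dots> = (\<Sum>j<N-1. (y j)^2)"
  proof (rule sum.cong[OF refl])
    fix i assume i: "i \<in> {..<N-1}"
    have "(\<Sum>j<N-1. y i * y j * (if i = j then 1 else 0)) = (\<Sum>j<N-1. if i = j then y i * y j else 0)"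
      by (rule sum.cong) auto
    also have "\<dots> = (y i)^2" using i by (subst sum.delta') (auto simp: power2_eq_square)
    finally show "(\<Sum>j<N-1. y i * y j * (if i = j then 1 else 0)) = (y i)^2" .
  qed
  finally show ?thesis .
qed

lemma Fq_lower:
  assumes mu: "\<mu> > 1" and t0: "t0 > - (\<mu> - 1)" and t: "t \<ge> t0" and N: "2 \<le> N"
    and onb: "is_onb_sum_zero N A"
  defines "c0 \<equiv> min 1 ((\<mu> - 1 + t0) / \<mu>)"
  shows "Fq \<mu> N A t y \<ge> c0 * \<mu> / (2 * real N) * (\<Sum>j<N-1. (y j)^2)"
    and "k < N \<Longrightarrow> Fq \<mu> N A t y \<ge> c0 * \<mu> / (8 * pi^2) * (Amul N A y k)^2"
proof -
  have s: "(\<Sum>k<N. Amul N A y k) = 0" by (rule onb_sum_zero[OF onb])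
  have Npos: "real N > 0" using N by simp
  have "c0 * \<mu> * (\<Sum>j<N-1. (y j)^2) \<le> Phib \<mu> N t (Amul N A y) (Amul N A y)"
    using coerc(1)[OF mu t0 t N s] unfolding c0_def onb_P2[OF onb] .
  then show "Fq \<mu> N A t y \<ge> c0 * \<mu> / (2 * real N) * (\<Sum>j<N-1. (y j)^2)"
    unfolding Fq_def using Npos by (simp add: field_simps)
  assume k: "k < N"
  have "c0 * \<mu> * real N / (4 * pi^2) * (Amul N A y k)^2 \<le> Phib \<mu> N t (Amul N A y) (Amul N A y)"
    using coerc(2)[OF mu t0 t N s k] unfolding c0_def .
  then show "Fq \<mu> N A t y \<ge> c0 * \<mu> / (8 * pi^2) * (Amul N A y k)^2"
    unfolding Fq_def using Npos by (simp add: field_simps)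
qed

lemma solve:
  assumes mu: "\<mu> > 1" and t0: "t0 > - (\<mu> - 1)" and t: "t \<ge> t0" and N: "2 \<le> N"
    and onb: "is_onb_sum_zero N A"
  shows "\<exists>v. \<forall>j<N-1. (\<Sum>i<N-1. Mx \<mu> N A t j i * v i) = b j"
proof -
  define n where "n = N - 1"
  define c0 where "c0 = min 1 ((\<mu> - 1 + t0) / \<mu>)"
  have c0pos: "c0 > 0" unfolding c0_def using mu t0 by simp
  define M where "M = Matrix.mat n n (\<lambda>(j,i). Mx \<mu> N A t j i)"
  have Mc: "M \<in> carrier_mat n n" unfolding M_def by simp
  have Mv: "vec_index (mult_mat_vec M w) j = (\<Sum>i<n. Mx \<mu> N A t j i * vec_index w i)"
    if "j < n" "w \<in> carrier_vec n" for j w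
    using that unfolding M_def
    by (simp add: scalar_prod_def atLeast0LessThan)
  have "Determinant.det M \<noteq> 0"
  proof
    assume "Determinant.det M = 0"
    then obtain w where w: "w \<in> carrier_vec n" "w \<noteq> zero_vec n" "mult_mat_vec M w = zero_vec n"
      using det_0_iff_vec_prod_zero[OF Mc] by auto
    define v where "v i = vec_index w i" for i
    have "\<forall>j<n. (\<Sum>i<n. Mx \<mu> N A t j i * v i) = 0"
    proof (intro allI impI)
      fix j assume "j < n"
      then have "vec_index (mult_mat_vec M w) j = 0" using w by simp
      then show "(\<Sum>i<n. Mx \<mu> N A t j i * v i) = 0" using Mv[OF \<open>j < n\<close> w(1)] unfolding v_def by simp
    qed
    then have "Bq \<mu> N A t v v = 0" unfolding Bq_Mx n_def[symmetric]
      by (simp add: sum_distrib_left[symmetric] mult.assoc mult.commute mult.left_commute)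
    then have "Fq \<mu> N A t v = 0" using Bq_diag by simp
    then have "c0 * \<mu> / (2 * real N) * (\<Sum>j<n. (v j)^2) \<le> 0"
      using Fq_lower(1)[OF mu t0 t N onb, of v] unfolding c0_def n_def by simp
    moreover have "c0 * \<mu> / (2 * real N) > 0" using c0pos mu N by simp
    ultimately have "(\<Sum>j<n. (v j)^2) \<le> 0" by (metis mult_le_cancel_left_pos mult_zero_right)
    then have "\<forall>j<n. v j = 0"
    proof -
      have "(\<Sum>j<n. (v j)^2) \<ge> 0" by (rule sum_nonneg) simp
      then have "(\<Sum>j<n. (v j)^2) = 0" using \<open>(\<Sum>j<n. (v j)^2) \<le> 0\<close> by linarith
      then show ?thesis using sum_nonneg_eq_0_iff[of "{..<n}" "\<lambda>j. (v j)^2"] by simp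
    qed
    then have "w = zero_vec n" using w(1) unfolding v_def by (intro eq_vecI) auto
    then show False using w(2) by simp
  qed
  then obtain B where B: "M * B = one_mat n" "B \<in> carrier_mat n n"
    using det_non_zero_imp_unit[OF Mc] unfolding Units_def ring_mat_def by auto
  define bb where "bb = Matrix.vec n b"
  define u where "u = mult_mat_vec B bb"
  have uc: "u \<in> carrier_vec n" unfolding u_def bb_def using B by simp
  have "mult_mat_vec M u = bb" unfolding u_def
    using assoc_mult_mat_vec[OF Mc B(2), of bb] B(1) unfolding bb_def by simp
  then have "\<forall>j<n. (\<Sum>i<n. Mx \<mu> N A t j i * vec_index u i) = b j"
    using Mv[OF _ uc] unfolding bb_def by (metis index_vec)
  then show ?thesis unfolding n_def by blast
qed



lemma psf: "product_sigma_finite (\<lambda>_::nat. lborel :: real measure)"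
  by (simp add: product_sigma_finite_def lborel.sigma_finite_measure_axioms)

lemma comp_meas[measurable]: "(\<lambda>y. y j) \<in> borel_measurable (RN n)"
proof (cases "j < n")
  case True
  have "(\<lambda>y. y j) \<in> measurable (PiM {..<n} (\<lambda>_. lborel)) lborel"
    by (rule measurable_component_singleton) (use True in simp)
  then show ?thesis unfolding RN_def by (metis measurable_cong_sets sets_lborel)
next
  case False
  have "(\<lambda>y. undefined) \<in> borel_measurable (RN n)" by simp
  then show ?thesis
    by (rule measurable_cong[THEN iffD1, rotated])
       (use False in \<open>auto simp: RN_def space_PiM PiE_def extensional_def\<close>)
qed

lemma Amul_meas[measurable]: "(\<lambda>y. Amul N A y k) \<in> borel_measurable (RN n)"
  unfolding Amul_def by measurable

lemma weight_meas[measurable]: "weight \<mu> N A t \<in> borel_measurable (RN n)"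
  unfolding weight_def Pm_def Qf_def KN_def by measurable

lemma Pm_meas[measurable]: "Pm m N A \<in> borel_measurable (RN n)"
  unfolding Pm_def by measurable

lemma RN_translate:
  "distr (RN n) (RN n) (\<lambda>y. \<lambda>i\<in>{..<n}. y i + v i) = RN n"
proof -
  have T: "(\<lambda>y. \<lambda>i\<in>{..<n}. y i + v i) \<in> RN n \<rightarrow>\<^sub>M RN n"
    unfolding RN_def by measurable
  show ?thesis unfolding RN_def
  proof (rule product_sigma_finite.PiM_eqI[OF psf])
    show "finite {..<n}" by simp
    show "sets (distr (Pi\<^sub>M {..<n} (\<lambda>_. lborel)) (Pi\<^sub>M {..<n} (\<lambda>_. lborel)) (\<lambda>y. \<lambda>i\<in>{..<n}. y i + v i))
          = sets (Pi\<^sub>M {..<n} (\<lambda>_. lborel))" by simp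
    fix B assume B: "\<And>i. i \<in> {..<n} \<Longrightarrow> B i \<in> sets (lborel::real measure)"
    have Bs: "Pi\<^sub>E {..<n} B \<in> sets (Pi\<^sub>M {..<n} (\<lambda>_. lborel))"
      using B by (intro sets_PiM_I_finite) auto
    have pre: "(\<lambda>y. \<lambda>i\<in>{..<n}. y i + v i) -` Pi\<^sub>E {..<n} B \<inter> space (Pi\<^sub>M {..<n} (\<lambda>_. lborel))
        = Pi\<^sub>E {..<n} (\<lambda>i. (\<lambda>u. u + v i) -` B i)"
      by (auto simp: space_PiM PiE_def Pi_def extensional_def)
    have one: "emeasure lborel ((\<lambda>u. u + v i) -` B i) = emeasure lborel (B i)" if "i < n" for i
    proof -
      have Bi: "B i \<in> sets borel" using B that by simp
      have "emeasure lborel (B i) = emeasure (distr lborel borel ((+) (v i))) (B i)"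
        by (simp add: lborel_distr_plus)
      also have "\<dots> = emeasure lborel ((+) (v i) -` B i \<inter> space lborel)"
        by (rule emeasure_distr) (use Bi in auto)
      also have "(+) (v i) -` B i \<inter> space lborel = (\<lambda>u. u + v i) -` B i"
        by (auto simp: add.commute)
      finally show ?thesis by simp
    qed
    have Bs': "(\<lambda>u. u + v i) -` B i \<in> sets lborel" if "i < n" for i
    proof -
      have "(\<lambda>u::real. u + v i) \<in> borel_measurable borel" by measurable
      then have "(\<lambda>u. u + v i) -` B i \<in> sets borel" by (rule measurable_sets_borel) (use B[of i] that in simp)
      then show ?thesis by simp
    qed
    have "emeasure (distr (Pi\<^sub>M {..<n} (\<lambda>_. lborel)) (Pi\<^sub>M {..<n} (\<lambda>_. lborel)) (\<lambda>y. \<lambda>i\<in>{..<n}. y i + v i)) (Pi\<^sub>E {..<n} B)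
        = emeasure (Pi\<^sub>M {..<n} (\<lambda>_. lborel)) (Pi\<^sub>E {..<n} (\<lambda>i. (\<lambda>u. u + v i) -` B i))"
      using T Bs unfolding RN_def by (simp add: emeasure_distr pre)
    also have "\<dots> = (\<Prod>i<n. emeasure lborel ((\<lambda>u. u + v i) -` B i))"
      using Bs' by (subst product_sigma_finite.emeasure_PiM[OF psf]) auto
    also have "\<dots> = (\<Prod>i<n. emeasure lborel (B i))"
      using one by (intro prod.cong) auto
    finally show "emeasure (distr (Pi\<^sub>M {..<n} (\<lambda>_. lborel)) (Pi\<^sub>M {..<n} (\<lambda>_. lborel)) (\<lambda>y. \<lambda>i\<in>{..<n}. y i + v i)) (Pi\<^sub>E {..<n} B)
        = (\<Prod>i\<in>{..<n}. emeasure lborel (B i))" by simp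
  qed
qed

lemma gauss_integrable:
  fixes a c :: real assumes c: "c > 0"
  shows "integrable lborel (\<lambda>u. exp (a * u - c * u^2))"
proof -
  define m where "m = a / (2 * c)"
  define s where "s = sqrt (1 / (2 * c))"
  have s0: "s > 0" unfolding s_def using c by simp
  have s2: "s^2 = 1 / (2 * c)" unfolding s_def using c by simp
  define K where "K = exp (a^2 / (4 * c)) * sqrt (2 * pi * s^2)"
  have "integrable lborel (\<lambda>u. K * normal_density m s u)"
    using integrable_normal_density[OF s0] by simp
  moreover have "K * normal_density m s u = exp (a * u - c * u^2)" for u
  proof -
    have sq: "sqrt (2 * pi * s^2) > 0" using s0 by simp
    have "K * normal_density m s u = exp (a^2 / (4 * c)) * exp (- ((u - m)^2) / (2 * s^2))"
      unfolding K_def normal_density_def using sq s0 by simp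
    also have "\<dots> = exp (a^2 / (4 * c) - (u - m)^2 * c)" unfolding s2
      using c by (simp add: exp_add[symmetric] field_simps)
    also have "a^2 / (4 * c) - (u - m)^2 * c = a * u - c * u^2"
      unfolding m_def using c by (simp add: field_simps power2_eq_square)
    finally show ?thesis .
  qed
  ultimately show ?thesis by simp
qed



lemma weight_Fq: "weight \<mu> N A t y = exp (- Fq \<mu> N A t y)"
  unfolding weight_def Fq_def tPQ_Phib by simp

lemma quartic_exp: "(u::real)^4 \<le> 256 * (exp u + exp (- u))"
proof -
  have main: "x^4 \<le> 256 * exp x" if "x \<ge> 0" for x :: real
  proof -
    have "x / 4 \<le> exp (x / 4)" using exp_ge_add_one_self[of "x/4"] by linarith
    then have "(x / 4)^4 \<le> (exp (x / 4))^4" using that by (intro power_mono) auto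
    also have "(exp (x / 4))^4 = exp x" by (simp add: exp_of_nat_mult[symmetric])
    finally show ?thesis by (simp add: power_divide)
  qed
  show ?thesis
  proof (cases "u \<ge> 0")
    case True
    have d: "256 * (exp u + exp (- u)) = 256 * exp u + 256 * exp (- u)" by (simp add: algebra_simps)
    have "0 < exp (- u)" by simp
    then show ?thesis using main[OF True] d by linarith
  next
    case False
    then have "(- u)^4 \<le> 256 * exp (- u)" using main[of "- u"] by simp
    then have a: "u^4 \<le> 256 * exp (- u)" by simp
    have d: "256 * (exp u + exp (- u)) = 256 * exp u + 256 * exp (- u)" by (simp add: algebra_simps)
    have "0 < exp u" by simp
    then show ?thesis using a d by linarith
  qed
qed

lemma Amul_restrict: "Amul N A (\<lambda>i\<in>{..<N-1}. f i) = Amul N A f"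
  unfolding Amul_def by (intro ext sum.cong) auto

lemma Fq_restrict: "Fq \<mu> N A t (\<lambda>i\<in>{..<N-1}. f i) = Fq \<mu> N A t f"
  unfolding Fq_def Amul_restrict ..

lemma integrable_expL:
  assumes mu: "\<mu> > 1" and t0: "t0 > - (\<mu> - 1)" and t: "t \<ge> t0" and N: "2 \<le> N"
    and onb: "is_onb_sum_zero N A"
  shows "integrable (RN (N-1)) (\<lambda>y. exp (\<Sum>j<N-1. a j * y j) * weight \<mu> N A t y)"
proof -
  define c0 where "c0 = min 1 ((\<mu> - 1 + t0) / \<mu>)"
  have c0pos: "c0 > 0" unfolding c0_def using mu t0 by simp
  define c where "c = c0 * \<mu> / (2 * real N)"
  have cpos: "c > 0" unfolding c_def using c0pos mu N by simp
  define g where "g y = (\<Prod>j<N-1. exp (a j * y j - c * (y j)^2))" for y :: "nat \<Rightarrow> real"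
  have ig: "integrable (RN (N-1)) g" unfolding RN_def g_def
    by (rule product_sigma_finite.product_integrable_prod[OF psf]) (auto intro: gauss_integrable[OF cpos])
  show ?thesis
  proof (rule Bochner_Integration.integrable_bound[OF ig])
    show "(\<lambda>y. exp (\<Sum>j<N-1. a j * y j) * weight \<mu> N A t y) \<in> borel_measurable (RN (N-1))"
      by measurable
    show "AE y in RN (N-1). norm (exp (\<Sum>j<N-1. a j * y j) * weight \<mu> N A t y) \<le> norm (g y)"
    proof (rule AE_I2)
      fix y :: "nat \<Rightarrow> real"
      have F: "Fq \<mu> N A t y \<ge> c * (\<Sum>j<N-1. (y j)^2)"
        using Fq_lower(1)[OF mu t0 t N onb, of y] unfolding c_def c0_def by simp
      have "norm (exp (\<Sum>j<N-1. a j * y j) * weight \<mu> N A t y) = exp ((\<Sum>j<N-1. a j * y j) - Fq \<mu> N A t y)"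
        unfolding weight_Fq by (simp add: exp_diff exp_minus field_simps)
      also have "\<dots> \<le> exp ((\<Sum>j<N-1. a j * y j) - c * (\<Sum>j<N-1. (y j)^2))"
        using F by simp
      also have "\<dots> = g y" unfolding g_def
        by (simp add: exp_sum[symmetric] sum_subtractf sum_distrib_left)
      also have "\<dots> = norm (g y)" unfolding g_def by (simp add: prod_nonneg abs_prod)
      finally show "norm (exp (\<Sum>j<N-1. a j * y j) * weight \<mu> N A t y) \<le> norm (g y)" .
    qed
  qed
qed

lemma shift_identity:
  assumes mu: "\<mu> > 1" and t0: "t0 > - (\<mu> - 1)" and t: "t \<ge> t0" and N: "2 \<le> N"
    and onb: "is_onb_sum_zero N A" and k0: "k0 < N"
  defines "c1 \<equiv> min 1 ((\<mu> - 1 + t0) / \<mu>) * \<mu> / (8 * pi^2)"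
  shows "\<exists>r. r \<le> s^2 / (4 * c1) \<and>
     (\<integral>y. exp (s * Amul N A y k0) * weight \<mu> N A t y \<partial>RN (N-1)) = exp r * ZN \<mu> N A t"
proof -
  define n where "n = N - 1"
  have c1pos: "c1 > 0" unfolding c1_def using mu t0 by simp
  obtain v where v: "\<forall>j<N-1. (\<Sum>i<N-1. Mx \<mu> N A t j i * v i) = s * A k0 j"
    using solve[OF mu t0 t N onb, of "\<lambda>j. s * A k0 j"] by blast
  have Bv: "Bq \<mu> N A t y v = s * Amul N A y k0" for y
  proof -
    have "Bq \<mu> N A t y v = (\<Sum>j<N-1. y j * (\<Sum>i<N-1. Mx \<mu> N A t j i * v i))"
      unfolding Bq_Mx by (simp add: sum_distrib_left algebra_simps)
    also have "\<dots> = (\<Sum>j<N-1. y j * (s * A k0 j))" using v by simp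
    also have "\<dots> = s * Amul N A y k0" unfolding Amul_def by (simp add: sum_distrib_left algebra_simps)
    finally show ?thesis .
  qed
  define T where "T y = (\<lambda>i\<in>{..<n}. y i + v i)" for y :: "nat \<Rightarrow> real"
  have Tm: "T \<in> RN n \<rightarrow>\<^sub>M RN n" unfolding T_def RN_def by measurable
  define f where "f y = exp (s * Amul N A y k0) * weight \<mu> N A t y" for y
  have fm: "f \<in> borel_measurable (RN n)" unfolding f_def by measurable
  define r where "r = s * Amul N A v k0 - Fq \<mu> N A t v"
  have fT: "f (T y) = exp r * weight \<mu> N A t y" for y
  proof -
    have A1: "Amul N A (T y) = Amul N A (\<lambda>i. y i + v i)" unfolding T_def n_def by (rule Amul_restrict)
    have F1: "Fq \<mu> N A t (T y) = Fq \<mu> N A t (\<lambda>i. y i + v i)" unfolding T_def n_def by (rule Fq_restrict)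
    have "f (T y) = exp (s * (Amul N A y k0 + Amul N A v k0)) *
        exp (- (Fq \<mu> N A t y + s * Amul N A y k0 + Fq \<mu> N A t v))"
      unfolding f_def weight_Fq A1 F1 Amul_add Fq_add Bv ..
    also have "\<dots> = exp (s * (Amul N A y k0 + Amul N A v k0) + - (Fq \<mu> N A t y + s * Amul N A y k0 + Fq \<mu> N A t v))"
      by (rule mult_exp_exp)
    also have "\<dots> = exp (r + - Fq \<mu> N A t y)"
      by (rule arg_cong[where f=exp]) (simp add: r_def algebra_simps)
    also have "\<dots> = exp r * weight \<mu> N A t y" unfolding weight_Fq by (simp add: mult_exp_exp)
    finally show ?thesis .
  qed
  have "(\<integral>y. f y \<partial>RN n) = (\<integral>y. f y \<partial>distr (RN n) (RN n) T)"
    unfolding T_def RN_translate ..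
  also have "\<dots> = (\<integral>y. f (T y) \<partial>RN n)" by (rule integral_distr[OF Tm fm])
  also have "\<dots> = exp r * ZN \<mu> N A t" unfolding fT ZN_def n_def by simp
  finally have eq: "(\<integral>y. f y \<partial>RN n) = exp r * ZN \<mu> N A t" .
  have "r \<le> s * Amul N A v k0 - c1 * (Amul N A v k0)^2"
    using Fq_lower(2)[OF mu t0 t N onb k0, of v] unfolding r_def c1_def by simp
  also have "\<dots> \<le> s^2 / (4 * c1)"
  proof -
    define x where "x = Amul N A v k0"
    have "4 * c1 * (s * x - c1 * x^2) = s^2 - (s - 2 * c1 * x)^2" by (simp add: power2_eq_square algebra_simps)
    also have "\<dots> \<le> s^2" by simp
    finally have "4 * c1 * (s * x - c1 * x^2) \<le> s^2" .
    then show ?thesis unfolding x_def[symmetric] using c1pos by (simp add: field_simps)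
  qed
  finally show ?thesis using eq unfolding f_def n_def by blast
qed

theorem lemma5p4:
  fixes \<mu> t0 :: real
  assumes "\<mu> > 1" and "t0 > - (\<mu> - 1)"
  shows "\<exists>C>0. \<forall>t\<ge>t0. \<forall>N::nat. \<forall>A. is_onb_sum_zero N A \<longrightarrow>
           integrable (RN (N - 1)) (weight \<mu> N A t) \<and>
           integrable (RN (N - 1)) (\<lambda>y. Pm 4 N A y / real N * weight \<mu> N A t y) \<and>
           (\<integral>y. Pm 4 N A y / real N * weight \<mu> N A t y \<partial>RN (N - 1)) / ZN \<mu> N A t \<le> C"
proof -
  note mu = assms(1) and t0 = assms(2)
  define c1 where "c1 = min 1 ((\<mu> - 1 + t0) / \<mu>) * \<mu> / (8 * pi^2)"
  have c1pos: "c1 > 0" unfolding c1_def using mu t0 by simp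
  define C where "C = 512 * exp (1 / (4 * c1))"
  have Cpos: "C > 0" unfolding C_def by simp
  show ?thesis
  proof (rule exI[of _ C], rule conjI[OF Cpos], intro allI impI)
    fix t N A assume t: "t \<ge> t0" and onb: "is_onb_sum_zero N A"
    show "integrable (RN (N - 1)) (weight \<mu> N A t) \<and>
           integrable (RN (N - 1)) (\<lambda>y. Pm 4 N A y / real N * weight \<mu> N A t y) \<and>
           (\<integral>y. Pm 4 N A y / real N * weight \<mu> N A t y \<partial>RN (N - 1)) / ZN \<mu> N A t \<le> C"
    proof (cases "2 \<le> N")
      case False
      then have n0: "N - 1 = 0" by simp
      have Am: "Amul N A y k = 0" for y k unfolding Amul_def n0 by simp
      have w1: "weight \<mu> N A t = (\<lambda>y. 1)" unfolding weight_def Pm_def Qf_def Am by simp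
      have P40: "(\<lambda>y. Pm 4 N A y / real N * weight \<mu> N A t y) = (\<lambda>y. 0)"
        unfolding Pm_def Am by simp
      have R: "RN (N - 1) = count_space {\<lambda>_. undefined}" unfolding n0 RN_def lessThan_0 PiM_empty ..
      have P4z: "Pm 4 N A y = 0" for y unfolding Pm_def Am by simp
      show ?thesis unfolding w1 R using Cpos by (simp add: P4z integrable_count_space)
    next
      case True
      note N2 = True
      let ?w = "weight \<mu> N A t"
      define Z where "Z = ZN \<mu> N A t"
      have Z0: "Z \<ge> 0" unfolding Z_def ZN_def weight_def by simp
      have w0: "?w y \<ge> 0" for y unfolding weight_def by simp
      have iw: "integrable (RN (N-1)) ?w"
        using integrable_expL[OF mu t0 t N2 onb, of "\<lambda>_. 0"] by simp
      have ie: "integrable (RN (N-1)) (\<lambda>y. exp (s * Amul N A y k) * ?w y)" for s k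
      proof -
        have e: "\<And>y. s * Amul N A y k = (\<Sum>j<N-1. (s * A k j) * y j)"
          unfolding Amul_def by (simp add: sum_distrib_left mult.assoc)
        show ?thesis unfolding e by (rule integrable_expL[OF mu t0 t N2 onb])
      qed
      have ib: "integrable (RN (N-1)) (\<lambda>y. 256 * (exp (1 * Amul N A y k) * ?w y + exp ((- 1) * Amul N A y k) * ?w y))" for k
        using ie[of 1 k] ie[of "- 1" k] by (intro integrable_mult_right Bochner_Integration.integrable_add)
      have pt: "(Amul N A y k)^4 * ?w y \<le> 256 * (exp (1 * Amul N A y k) * ?w y + exp ((- 1) * Amul N A y k) * ?w y)" for y k
      proof -
        have "(Amul N A y k)^4 * ?w y \<le> (256 * (exp (Amul N A y k) + exp (- Amul N A y k))) * ?w y"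
          using quartic_exp[of "Amul N A y k"] w0[of y] by (rule mult_right_mono)
        then show ?thesis by (simp add: algebra_simps)
      qed
      have i4: "integrable (RN (N-1)) (\<lambda>y. (Amul N A y k)^4 * ?w y)" for k
      proof (rule Bochner_Integration.integrable_bound[OF ib[of k]])
        show "(\<lambda>y. (Amul N A y k)^4 * ?w y) \<in> borel_measurable (RN (N-1))" by measurable
        show "AE y in RN (N-1). norm ((Amul N A y k)^4 * ?w y) \<le>
            norm (256 * (exp (1 * Amul N A y k) * ?w y + exp ((- 1) * Amul N A y k) * ?w y))"
        proof (rule AE_I2)
          fix y
          have "norm ((Amul N A y k)^4 * ?w y) = (Amul N A y k)^4 * ?w y"
            using w0[of y] by (simp add: abs_mult)
          also have "\<dots> \<le> 256 * (exp (1 * Amul N A y k) * ?w y + exp ((- 1) * Amul N A y k) * ?w y)" by (rule pt)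
          also have "\<dots> \<le> norm (256 * (exp (1 * Amul N A y k) * ?w y + exp ((- 1) * Amul N A y k) * ?w y))" by simp
          finally show "norm ((Amul N A y k)^4 * ?w y) \<le>
            norm (256 * (exp (1 * Amul N A y k) * ?w y + exp ((- 1) * Amul N A y k) * ?w y))" .
        qed
      qed
      have P4eq: "(\<lambda>y. Pm 4 N A y / real N * ?w y) = (\<lambda>y. \<Sum>k<N. (1 / real N) * ((Amul N A y k)^4 * ?w y))"
        unfolding Pm_def by (simp add: sum_distrib_left sum_distrib_right sum_divide_distrib)
      have iP: "integrable (RN (N-1)) (\<lambda>y. Pm 4 N A y / real N * ?w y)"
        unfolding P4eq by (rule Bochner_Integration.integrable_sum, rule Bochner_Integration.integrable_mult_right, rule i4)
      have Ek: "(\<integral>y. exp (s * Amul N A y k) * ?w y \<partial>RN (N-1)) \<le> exp (1 / (4 * c1)) * Z"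
        if s: "s^2 = 1" and k: "k < N" for s k
      proof -
        obtain r where r: "r \<le> s^2 / (4 * c1)"
          "(\<integral>y. exp (s * Amul N A y k) * ?w y \<partial>RN (N-1)) = exp r * Z"
          using shift_identity[OF mu t0 t N2 onb k, of s] unfolding c1_def Z_def by blast
        have "exp r \<le> exp (1 / (4 * c1))" using r(1) s by simp
        then show ?thesis unfolding r(2) using Z0 by (rule mult_right_mono)
      qed
      have I4k: "(\<integral>y. (Amul N A y k)^4 * ?w y \<partial>RN (N-1)) \<le> 512 * exp (1 / (4 * c1)) * Z" if k: "k < N" for k
      proof -
        have "(\<integral>y. (Amul N A y k)^4 * ?w y \<partial>RN (N-1)) \<le>
            (\<integral>y. 256 * (exp (1 * Amul N A y k) * ?w y + exp ((- 1) * Amul N A y k) * ?w y) \<partial>RN (N-1))"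
          by (rule integral_mono[OF i4 ib pt])
        also have "\<dots> = 256 * ((\<integral>y. exp (1 * Amul N A y k) * ?w y \<partial>RN (N-1)) +
            (\<integral>y. exp ((- 1) * Amul N A y k) * ?w y \<partial>RN (N-1)))"
          using ie[of 1 k] ie[of "- 1" k] by simp
        also have "\<dots> \<le> 256 * (exp (1 / (4 * c1)) * Z + exp (1 / (4 * c1)) * Z)"
          by (intro mult_left_mono add_mono Ek) (use k in auto)
        finally show ?thesis by (simp add: mult_ac)
      qed
      have X: "(\<integral>y. Pm 4 N A y / real N * ?w y \<partial>RN (N - 1)) \<le> C * Z"
      proof -
        have "(\<integral>y. Pm 4 N A y / real N * ?w y \<partial>RN (N - 1)) =
            (\<Sum>k<N. (1 / real N) * (\<integral>y. (Amul N A y k)^4 * ?w y \<partial>RN (N-1)))"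
          unfolding P4eq using i4 by (simp add: integral_sum)
        also have "\<dots> \<le> (\<Sum>k<N. (1 / real N) * (512 * exp (1 / (4 * c1)) * Z))"
          using I4k by (intro sum_mono mult_left_mono) auto
        also have "\<dots> = C * Z" unfolding C_def using N2 by simp
        finally show ?thesis .
      qed
      have "(\<integral>y. Pm 4 N A y / real N * ?w y \<partial>RN (N - 1)) / Z \<le> C"
      proof (cases "Z = 0")
        case True then show ?thesis using Cpos by simp
      next
        case False
        then have "Z > 0" using Z0 by simp
        then show ?thesis by (rule pos_divide_le_eq[THEN iffD2, OF _ X])
      qed
      then have fin: "(\<integral>y. Pm 4 N A y / real N * ?w y \<partial>RN (N - 1)) / ZN \<mu> N A t \<le> C"
        unfolding Z_def .
      show ?thesis using iw iP fin by blast
    qed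
  qed
qed

end
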